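(* For every $0<p_0,q_0<\infty$, \[ \mathcal{A}(p_0,q_0)=\{(p,q):\ 0<p,q<\infty,\ p\ge p_0,\ q\ge q_0,\ q/p\le q_0/p_0\}. \]
   Context: $\lambda_f(\tau)=\mu\{|f|>\tau\}$, $f^*(s)=\inf\{\tau>0:\lambda_f(\tau)\le s\}$; for $a>0$, $\int_0^\infty h\,d(t^a):=a\int_0^\infty h(t)t^{a-1}dt$. For fixed $0<p_0,q_0<\infty$, $\mathcal{A}(p_0,q_0)$ denotes the set of all pairs $(p,q)$ with $0<p,q<\infty$ such that: for arbitrary measurable functions $f,g$ (on $(0,\infty)$ with Lebesgue measure, or any $\sigma$-finite measure space) satisfying (i) there is $\tau_0\in(0,\infty)$ with $\lambda_f(\tau)\le\lambda_g(\tau)$ for $\tau<\tau_0$ and $\lambda_f(\tau)\ge\lambda_g(\tau)$ for $\tau>\tau_0$, (ii) $\int_0^\infty(f^*(t)^{q_0}-g^*(t)^{q_0})\,d(t^{q_0/p_0})\ge0$, and (iii) $(f^*(t)^q-g^*(t)^q)t^{q/p-1}\in L^1(0,\infty)$, it follows that $\int_0^\infty(f^*(t)^q-g^*(t)^q)\,d(t^{q/p})\ge0$. *)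

theory Defs
  imports "HOL-Analysis.Analysis"
begin

text \<open>Underlying measure space: (0,\<infinity>) with Lebesgue measure.
  Functions are real-valued and Lebesgue measurable; only their values on (0,\<infinity>) matter.\<close>

definition dist_fun :: "(real \<Rightarrow> real) \<Rightarrow> real \<Rightarrow> ennreal" where
  "dist_fun f \<tau> = emeasure lebesgue {x \<in> {0<..}. \<bar>f x\<bar> > \<tau>}"

text \<open>Decreasing rearrangement, extended-real valued (Inf of the empty set is \<infinity>).\<close>
definition decr_rearr :: "(real \<Rightarrow> real) \<Rightarrow> real \<Rightarrow> ereal" where
  "decr_rearr f s = Inf {ereal \<tau> | \<tau>. \<tau> > 0 \<and> dist_fun f \<tau> \<le> ennreal s}"

text \<open>Real value of f^*(t) (used only where f^* is known to be finite).\<close>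
definition rstar :: "(real \<Rightarrow> real) \<Rightarrow> real \<Rightarrow> real" where
  "rstar f t = real_of_ereal (decr_rearr f t)"

text \<open>\<integral>_0^\<infinity> h d(t^a) := a \<integral>_0^\<infinity> h(t) t^(a-1) dt, as an integrand on (0,\<infinity>).\<close>
definition dpow_integrand :: "real \<Rightarrow> (real \<Rightarrow> real) \<Rightarrow> real \<Rightarrow> real" where
  "dpow_integrand a h t = a * h t * t powr (a - 1)"

text \<open>"The integral of u over (0,\<infinity>) exists (in the extended sense) and is \<ge> 0":
  the negative part has finite integral, not exceeding the integral of the positive part.\<close>
definition ext_integral_nonneg :: "(real \<Rightarrow> real) \<Rightarrow> bool" where
  "ext_integral_nonneg u \<longleftrightarrow>
     (\<integral>\<^sup>+ t. indicator {0<..} t * ennreal (- u t) \<partial>lborel) < \<infinity> \<and>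
     (\<integral>\<^sup>+ t. indicator {0<..} t * ennreal (- u t) \<partial>lborel)
       \<le> (\<integral>\<^sup>+ t. indicator {0<..} t * ennreal (u t) \<partial>lborel)"

definition cond_i :: "(real \<Rightarrow> real) \<Rightarrow> (real \<Rightarrow> real) \<Rightarrow> bool" where
  "cond_i f g \<longleftrightarrow> (\<exists>\<tau>0>0. (\<forall>\<tau>. 0 < \<tau> \<and> \<tau> < \<tau>0 \<longrightarrow> dist_fun f \<tau> \<le> dist_fun g \<tau>) \<and>
                            (\<forall>\<tau>. \<tau> > \<tau>0 \<longrightarrow> dist_fun f \<tau> \<ge> dist_fun g \<tau>))"

definition diff_pow :: "real \<Rightarrow> (real \<Rightarrow> real) \<Rightarrow> (real \<Rightarrow> real) \<Rightarrow> real \<Rightarrow> real" where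
  "diff_pow r f g t = rstar f t powr r - rstar g t powr r"

text \<open>Membership of (p,q) in the class \<A>(p0,q0). Condition (iii) (membership in L^1(0,\<infinity>))
  includes that f^*, g^* are a.e. finite, so that the integrand is a real-valued function.\<close>
definition classA :: "real \<Rightarrow> real \<Rightarrow> (real \<times> real) set" where
  "classA p0 q0 = {(p, q). 0 < p \<and> 0 < q \<and>
     (\<forall>f g. f \<in> borel_measurable lebesgue \<longrightarrow> g \<in> borel_measurable lebesgue \<longrightarrow>
        cond_i f g \<longrightarrow>
        ext_integral_nonneg (dpow_integrand (q0 / p0) (diff_pow q0 f g)) \<longrightarrow>
        (AE t in lborel. t > 0 \<longrightarrow> decr_rearr f t \<noteq> \<infinity> \<and> decr_rearr g t \<noteq> \<infinity>) \<longrightarrow>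
        set_integrable lborel {0<..} (\<lambda>t. diff_pow q f g t * t powr (q / p - 1)) \<longrightarrow>
        (LINT t:{0<..}|lborel. dpow_integrand (q / p) (diff_pow q f g) t) \<ge> 0)}"

end

theory Submission
  imports Defs
begin


lemma tangent_powr:
  fixes U V s :: real
  assumes "s \<ge> 1" "V > 0" "U \<ge> 0"
  shows "U powr s \<ge> V powr s + s * V powr (s - 1) * (U - V)"
proof (cases "U = 0")
  case True
  have "V powr s = V powr (s-1) * V" using assms by (simp add: powr_diff)
  then have "V powr s + s * V powr (s - 1) * (U - V) = (1 - s) * V powr s" using True
    by (simp add: algebra_simps)
  also have "\<dots> \<le> 0" using assms by (simp add: mult_nonpos_nonneg)
  finally show ?thesis using True by simp
next
  case False
  have "U powr s - V powr s \<ge> (s * V powr (s - 1)) * (U - V)"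
    using assms False
    by (intro convex_on_imp_above_tangent[where A = "{0<..}"] powr_convex)
       (auto simp: interior_open intro!: derivative_eq_intros)
  then show ?thesis by simp
qed



lemma dr_nonneg: "decr_rearr f t \<ge> 0"
  unfolding decr_rearr_def by (rule Inf_greatest) auto

lemma dr_antimono: "s \<le> t \<Longrightarrow> decr_rearr f t \<le> decr_rearr f s"
  unfolding decr_rearr_def
  by (rule Inf_superset_mono) (auto intro: order_trans[OF _ ennreal_leI])

lemma dist_meas:
  fixes f :: "real \<Rightarrow> real"
  assumes "f \<in> borel_measurable lebesgue"
  shows "{x \<in> {0<..}. \<bar>f x\<bar> > \<tau>} \<in> sets lebesgue"
proof -
  have e: "{x \<in> {0<..}. \<bar>f x\<bar> > \<tau>} = {0<..} \<inter> {x \<in> space lebesgue. \<tau> < \<bar>f x\<bar>}" by auto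
  have m: "(\<lambda>x. \<bar>f x\<bar>) \<in> borel_measurable lebesgue" using assms by (rule borel_measurable_abs)
  have "{x \<in> space lebesgue. \<tau> < \<bar>f x\<bar>} \<in> sets lebesgue" using m by measurable
  moreover
  have "({0<..}::real set) \<in> sets lebesgue" by simp
  ultimately show ?thesis unfolding e by (rule sets.Int[rotated])
qed

lemma dist_antimono:
  assumes "f \<in> borel_measurable lebesgue" "\<sigma> \<le> \<tau>"
  shows "dist_fun f \<tau> \<le> dist_fun f \<sigma>"
  unfolding dist_fun_def using assms
  by (intro emeasure_mono dist_meas) auto

lemma dr_L1:
  assumes "f \<in> borel_measurable lebesgue" "\<not> dist_fun f \<tau> \<le> ennreal t"
  shows "ereal \<tau> \<le> decr_rearr f t"
  unfolding decr_rearr_def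
proof (rule Inf_greatest)
  fix x assume "x \<in> {ereal \<tau> |\<tau>. \<tau> > 0 \<and> dist_fun f \<tau> \<le> ennreal t}"
  then obtain \<tau>' where x: "x = ereal \<tau>'" "\<tau>' > 0" "dist_fun f \<tau>' \<le> ennreal t" by auto
  show "ereal \<tau> \<le> x"
  proof (rule ccontr)
    assume "\<not> ereal \<tau> \<le> x"
    then have "\<tau>' \<le> \<tau>" using x by auto
    then have "dist_fun f \<tau> \<le> dist_fun f \<tau>'" by (rule dist_antimono[OF assms(1)])
    with x assms show False by (meson order_trans)
  qed
qed

lemma dr_L2:
  assumes "\<tau> > 0" "dist_fun f \<tau> \<le> ennreal t"
  shows "decr_rearr f t \<le> ereal \<tau>"
  unfolding decr_rearr_def using assms by (intro Inf_lower) auto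

lemma dr_L3:
  assumes "f \<in> borel_measurable lebesgue" "decr_rearr f t < ereal \<tau>"
  shows "dist_fun f \<tau> \<le> ennreal t"
proof -
  from assms(2) obtain x where "x \<in> {ereal \<tau> |\<tau>. \<tau> > 0 \<and> dist_fun f \<tau> \<le> ennreal t}" "x < ereal \<tau>"
    unfolding decr_rearr_def by (auto simp: Inf_less_iff)
  then obtain \<tau>' where "\<tau>' < \<tau>" "dist_fun f \<tau>' \<le> ennreal t" by auto
  then show ?thesis using dist_antimono[OF assms(1), of \<tau>' \<tau>] by auto
qed

lemma P1:
  assumes f: "f \<in> borel_measurable lebesgue" and g: "g \<in> borel_measurable lebesgue"
    and t0: "\<tau>0 > 0"
    and ge: "\<And>\<tau>. \<tau> > \<tau>0 \<Longrightarrow> dist_fun f \<tau> \<ge> dist_fun g \<tau>"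
    and G: "decr_rearr g t > ereal \<tau>0"
  shows "decr_rearr f t \<ge> decr_rearr g t"
proof (rule dense_le_bounded[OF G])
  fix w assume w: "ereal \<tau>0 < w" "w < decr_rearr g t"
  then obtain \<tau> where \<tau>: "w = ereal \<tau>" by (cases w) auto
  with w have "\<tau> > \<tau>0" by auto
  have "\<not> dist_fun g \<tau> \<le> ennreal t"
    using dr_L2[of \<tau> g t] w \<tau> \<open>\<tau> > \<tau>0\<close> t0 by auto
  then have "\<not> dist_fun f \<tau> \<le> ennreal t" using ge[OF \<open>\<tau> > \<tau>0\<close>] by (meson order_trans)
  then show "w \<le> decr_rearr f t" using dr_L1[OF f] \<tau> by auto
qed

lemma P2:
  assumes f: "f \<in> borel_measurable lebesgue" and g: "g \<in> borel_measurable lebesgue"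
    and le: "\<And>\<tau>. 0 < \<tau> \<and> \<tau> < \<tau>0 \<Longrightarrow> dist_fun f \<tau> \<le> dist_fun g \<tau>"
    and G: "decr_rearr g t < ereal \<tau>0"
  shows "decr_rearr f t \<le> decr_rearr g t"
proof (rule dense_ge_bounded[OF G])
  fix w assume w: "decr_rearr g t < w" "w < ereal \<tau>0"
  have "w > 0" using w dr_nonneg[of g t] by auto
  then obtain \<tau> where \<tau>: "w = ereal \<tau>" using w by (cases w) auto
  with w \<open>w > 0\<close> have "\<tau> > 0" "\<tau> < \<tau>0" by auto
  have "dist_fun g \<tau> \<le> ennreal t" using dr_L3[OF g] w \<tau> by auto
  then have "dist_fun f \<tau> \<le> ennreal t" using le[of \<tau>] \<open>\<tau> > 0\<close> \<open>\<tau> < \<tau>0\<close> by (meson order_trans)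
  then show "decr_rearr f t \<le> w" using dr_L2 \<tau> \<open>\<tau> > 0\<close> by auto
qed



lemma alg_a:
  fixes x y \<tau>0 q q0 :: real
  assumes "x > y" "y \<ge> \<tau>0" "\<tau>0 > 0" "q \<ge> q0" "q0 > 0"
  shows "x powr q - y powr q \<ge> (q/q0) * \<tau>0 powr (q - q0) * (x powr q0 - y powr q0)"
proof -
  define U V s where "U = x powr q0" "V = y powr q0" "s = q / q0"
  have s1: "s \<ge> 1" using assms by (simp add: U_V_s_def)
  have V: "V > 0" using assms by (simp add: U_V_s_def)
  have U: "U \<ge> 0" by (simp add: U_V_s_def)
  have xU: "x powr q = U powr s" "y powr q = V powr s" using assms by (simp_all add: U_V_s_def powr_powr)
  have qq: "q0 * (q/q0 - 1) = q - q0" using assms by (simp add: field_simps)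
  have Vs: "V powr (s - 1) = y powr (q - q0)" using assms by (simp only: U_V_s_def powr_powr qq)
  have "V powr (s - 1) \<ge> \<tau>0 powr (q - q0)" unfolding Vs using assms by (intro powr_mono2) auto
  moreover have "U - V \<ge> 0" using assms by (auto simp: U_V_s_def intro: powr_mono2)
  ultimately have "s * V powr (s - 1) * (U - V) \<ge> s * \<tau>0 powr (q - q0) * (U - V)"
    using s1 by (intro mult_right_mono mult_left_mono) auto
  moreover have "U powr s \<ge> V powr s + s * V powr (s - 1) * (U - V)" by (rule tangent_powr[OF s1 V U])
  ultimately show ?thesis unfolding xU by (simp add: U_V_s_def)
qed

lemma alg_b:
  fixes x y \<tau>0 q q0 :: real
  assumes "x < y" "y \<le> \<tau>0" "x \<ge> 0" "q \<ge> q0" "q0 > 0"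
  shows "y powr q - x powr q \<le> (q/q0) * \<tau>0 powr (q - q0) * (y powr q0 - x powr q0)"
proof -
  define U V s where "U = x powr q0" "V = y powr q0" "s = q / q0"
  have s1: "s \<ge> 1" using assms by (simp add: U_V_s_def)
  have V: "V > 0" using assms by (simp add: U_V_s_def)
  have U: "U \<ge> 0" by (simp add: U_V_s_def)
  have xU: "x powr q = U powr s" "y powr q = V powr s" using assms by (simp_all add: U_V_s_def powr_powr)
  have qq: "q0 * (q/q0 - 1) = q - q0" using assms by (simp add: field_simps)
  have Vs: "V powr (s - 1) = y powr (q - q0)" using assms by (simp only: U_V_s_def powr_powr qq)
  have "V powr (s - 1) \<le> \<tau>0 powr (q - q0)" unfolding Vs using assms by (intro powr_mono2) auto
  moreover have "V - U \<ge> 0" using assms by (auto simp: U_V_s_def intro: powr_mono2)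
  ultimately have "s * V powr (s - 1) * (V - U) \<le> s * \<tau>0 powr (q - q0) * (V - U)"
    using s1 by (intro mult_right_mono mult_left_mono) auto
  moreover have "U powr s \<ge> V powr s + s * V powr (s - 1) * (U - V)" by (rule tangent_powr[OF s1 V U])
  ultimately have "V powr s - U powr s \<le> s * \<tau>0 powr (q - q0) * (V - U)"
    by (simp add: algebra_simps)
  then show ?thesis unfolding xU by (simp only: U_V_s_def)
qed

lemma pw_P:
  fixes x y \<tau>0 q q0 t ts r r0 :: real
  assumes "x > y" "y \<ge> \<tau>0" "\<tau>0 > 0" "q \<ge> q0" "q0 > 0" "0 < t" "t \<le> ts" "r \<le> r0"
  shows "(x powr q - y powr q) * t powr (r - 1) \<ge>
     ((q/q0) * \<tau>0 powr (q - q0) * ts powr (r - r0)) * ((x powr q0 - y powr q0) * t powr (r0 - 1))"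
proof -
  have A: "x powr q - y powr q \<ge> (q/q0) * \<tau>0 powr (q - q0) * (x powr q0 - y powr q0)"
    by (rule alg_a) (use assms in auto)
  have D: "x powr q0 - y powr q0 \<ge> 0" using assms by (auto intro: powr_mono2)
  have Dq: "x powr q - y powr q \<ge> 0" using assms by (auto intro: powr_mono2)
  have T: "t powr (r - r0) \<ge> ts powr (r - r0)" using assms by (intro powr_mono2') auto
  have E: "t powr (r - 1) = t powr (r - r0) * t powr (r0 - 1)" using assms by (simp add: powr_add[symmetric])
  have "((q/q0) * \<tau>0 powr (q - q0) * ts powr (r - r0)) * ((x powr q0 - y powr q0) * t powr (r0 - 1))
     = ((q/q0) * \<tau>0 powr (q - q0) * (x powr q0 - y powr q0)) * ts powr (r - r0) * t powr (r0 - 1)"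
    by (simp only: mult.assoc mult.commute mult.left_commute)
  also have "\<dots> \<le> (x powr q - y powr q) * t powr (r - r0) * t powr (r0 - 1)"
    using A T D Dq assms
    by (intro mult_right_mono mult_mono) (auto intro: mult_nonneg_nonneg)
  also have "\<dots> = (x powr q - y powr q) * t powr (r - 1)" unfolding E by simp
  finally show ?thesis .
qed

lemma pw_N:
  fixes x y \<tau>0 q q0 t ts r r0 :: real
  assumes "x < y" "y \<le> \<tau>0" "x \<ge> 0" "\<tau>0 > 0" "q \<ge> q0" "q0 > 0" "0 < ts" "ts \<le> t" "r \<le> r0"
  shows "(x powr q - y powr q) * t powr (r - 1) \<ge>
     ((q/q0) * \<tau>0 powr (q - q0) * ts powr (r - r0)) * ((x powr q0 - y powr q0) * t powr (r0 - 1))"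
proof -
  have A: "y powr q - x powr q \<le> (q/q0) * \<tau>0 powr (q - q0) * (y powr q0 - x powr q0)"
    by (rule alg_b) (use assms in auto)
  have D: "y powr q - x powr q \<ge> 0" using assms by (auto intro: powr_mono2)
  have T: "t powr (r - r0) \<le> ts powr (r - r0)" using assms by (intro powr_mono2') auto
  have E: "t powr (r - 1) = t powr (r - r0) * t powr (r0 - 1)" using assms by (simp add: powr_add[symmetric])
  have "(y powr q - x powr q) * t powr (r - 1) = (y powr q - x powr q) * t powr (r - r0) * t powr (r0 - 1)"
    unfolding E by simp
  also have "\<dots> \<le> ((q/q0) * \<tau>0 powr (q - q0) * (y powr q0 - x powr q0)) * ts powr (r - r0) * t powr (r0 - 1)"
    using A T D assms
    by (intro mult_right_mono mult_mono) auto
  finally have "(y powr q - x powr q) * t powr (r - 1)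
    \<le> ((q/q0) * \<tau>0 powr (q - q0) * ts powr (r - r0)) * ((y powr q0 - x powr q0) * t powr (r0 - 1))"
    by (simp only: mult.assoc mult.commute mult.left_commute)
  moreover have "\<And>a b C d e :: real. a*b \<le> C*(d*e) \<Longrightarrow> C*((-d)*e) \<le> (-a)*b" by simp
  ultimately show ?thesis by (metis minus_diff_eq)
qed



lemma downset_borel:
  fixes S :: "real set"
  assumes "\<And>s t. s \<le> t \<Longrightarrow> t \<in> S \<Longrightarrow> s \<in> S"
  shows "S \<in> sets borel"
proof (cases "S = UNIV \<or> S = {}")
  case True then show ?thesis by auto
next
  case False
  then obtain b a where b: "b \<notin> S" and a: "a \<in> S" by auto
  have ub: "x < b" if "x \<in> S" for x using assms[of b x] that b by force
  define m where "m = Sup S"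
  have bdd: "bdd_above S" using ub by (meson bdd_above.I less_imp_le)
  have le: "x \<le> m" if "x \<in> S" for x using cSup_upper[OF that bdd] m_def by simp
  have lt: "x \<in> S" if "x < m" for x
  proof -
    from that obtain y where "y \<in> S" "x < y" using less_cSup_iff[of S x] a bdd m_def by auto
    then show ?thesis using assms[of x y] by auto
  qed
  show ?thesis
  proof (cases "m \<in> S")
    case True
    then have "S = {..m}" using le lt by (auto simp: not_le less_le)
    then show ?thesis by simp
  next
    case False
    then have "S = {..<m}" using le lt by (auto simp: less_le)
    then show ?thesis by simp
  qed
qed

lemma dr_meas: "decr_rearr f \<in> borel_measurable borel"
proof (rule borel_measurableI_greater)
  fix y
  show "{x \<in> space borel. y < decr_rearr f x} \<in> sets borel"
    by (rule downset_borel) (auto intro: less_le_trans dr_antimono)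
qed

lemma rstar_meas[measurable]: "rstar f \<in> borel_measurable lborel"
proof -
  have "(\<lambda>t. real_of_ereal (decr_rearr f t)) \<in> borel_measurable borel"
    using dr_meas by measurable
  then show ?thesis by (simp add: rstar_def[abs_def])
qed

lemma ennreal_ind_mult: "ennreal (indicator A x * h x) = indicator A x * ennreal (h x)"
  by (cases "x \<in> A") auto

lemma lint_parts:
  fixes h :: "real \<Rightarrow> real"
  assumes "set_integrable lborel A h"
  shows "(\<integral>\<^sup>+ x. indicator A x * ennreal (h x) \<partial>lborel) < \<infinity>"
    "(\<integral>\<^sup>+ x. indicator A x * ennreal (- h x) \<partial>lborel) < \<infinity>"
    "(LINT x:A|lborel. h x) = enn2real (\<integral>\<^sup>+ x. indicator A x * ennreal (h x) \<partial>lborel)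
        - enn2real (\<integral>\<^sup>+ x. indicator A x * ennreal (- h x) \<partial>lborel)"
proof -
  let ?k = "\<lambda>x. indicator A x *\<^sub>R h x"
  have int: "integrable lborel ?k" using assms by (simp add: set_integrable_def)
  have fin: "(\<integral>\<^sup>+ x. ennreal (norm (?k x)) \<partial>lborel) < \<infinity>"
    using int by (simp add: integrable_iff_bounded)
  have e1: "(\<lambda>x. ennreal (?k x)) = (\<lambda>x. indicator A x * ennreal (h x))"
  proof (rule ext)
    fix x show "ennreal (?k x) = indicator A x * ennreal (h x)" by (cases "x \<in> A") auto
  qed
  have e2: "(\<lambda>x. ennreal (- ?k x)) = (\<lambda>x. indicator A x * ennreal (- h x))"
  proof (rule ext)
    fix x show "ennreal (- ?k x) = indicator A x * ennreal (- h x)" by (cases "x \<in> A") auto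
  qed
  have "(\<integral>\<^sup>+ x. ennreal (?k x) \<partial>lborel) \<le> (\<integral>\<^sup>+ x. ennreal (norm (?k x)) \<partial>lborel)"
    by (intro nn_integral_mono) (simp add: ennreal_leI)
  then show "(\<integral>\<^sup>+ x. indicator A x * ennreal (h x) \<partial>lborel) < \<infinity>" using le_less_trans[OF _ fin] unfolding e1 by blast
  have "(\<integral>\<^sup>+ x. ennreal (- ?k x) \<partial>lborel) \<le> (\<integral>\<^sup>+ x. ennreal (norm (?k x)) \<partial>lborel)"
    by (intro nn_integral_mono) (simp add: ennreal_leI)
  then show "(\<integral>\<^sup>+ x. indicator A x * ennreal (- h x) \<partial>lborel) < \<infinity>" using le_less_trans[OF _ fin] unfolding e2 by blast
  show "(LINT x:A|lborel. h x) = enn2real (\<integral>\<^sup>+ x. indicator A x * ennreal (h x) \<partial>lborel)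
        - enn2real (\<integral>\<^sup>+ x. indicator A x * ennreal (- h x) \<partial>lborel)"
    unfolding set_lebesgue_integral_def real_lebesgue_integral_def[OF int] e1[symmetric] e2[symmetric] ..
qed

lemma lint_nonneg:
  fixes h :: "real \<Rightarrow> real"
  assumes "set_integrable lborel A h"
    "(\<integral>\<^sup>+ x. indicator A x * ennreal (- h x) \<partial>lborel) \<le> (\<integral>\<^sup>+ x. indicator A x * ennreal (h x) \<partial>lborel)"
  shows "(LINT x:A|lborel. h x) \<ge> 0"
  using lint_parts[OF assms(1)] assms(2) by (simp add: enn2real_mono)

lemma lint_nonneg_conv:
  fixes h :: "real \<Rightarrow> real"
  assumes "set_integrable lborel A h" "(LINT x:A|lborel. h x) \<ge> 0"
  shows "(\<integral>\<^sup>+ x. indicator A x * ennreal (- h x) \<partial>lborel) < \<infinity> \<and>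
    (\<integral>\<^sup>+ x. indicator A x * ennreal (- h x) \<partial>lborel) \<le> (\<integral>\<^sup>+ x. indicator A x * ennreal (h x) \<partial>lborel)"
proof -
  note L = lint_parts[OF assms(1)]
  have "enn2real (\<integral>\<^sup>+ x. indicator A x * ennreal (- h x) \<partial>lborel) \<le> enn2real (\<integral>\<^sup>+ x. indicator A x * ennreal (h x) \<partial>lborel)"
    using L(3) assms(2) by simp
  then have "ennreal (enn2real (\<integral>\<^sup>+ x. indicator A x * ennreal (- h x) \<partial>lborel)) \<le> ennreal (enn2real (\<integral>\<^sup>+ x. indicator A x * ennreal (h x) \<partial>lborel))"
    using ennreal_leI by blast
  moreover have "ennreal (enn2real (\<integral>\<^sup>+ x. indicator A x * ennreal (- h x) \<partial>lborel)) = (\<integral>\<^sup>+ x. indicator A x * ennreal (- h x) \<partial>lborel)"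
    using L(2) by (intro ennreal_enn2real) auto
  moreover have "ennreal (enn2real (\<integral>\<^sup>+ x. indicator A x * ennreal (h x) \<partial>lborel)) = (\<integral>\<^sup>+ x. indicator A x * ennreal (h x) \<partial>lborel)"
    using L(1) by (intro ennreal_enn2real) auto
  ultimately show ?thesis using L(2) by simp
qed



lemma rstar_props:
  assumes "decr_rearr f t \<noteq> \<infinity>"
  shows "ereal (rstar f t) = decr_rearr f t" "rstar f t \<ge> 0"
proof -
  have "decr_rearr f t \<ge> 0" by (rule dr_nonneg)
  then show "ereal (rstar f t) = decr_rearr f t" using assms unfolding rstar_def
    by (intro ereal_real') auto
  show "rstar f t \<ge> 0" unfolding rstar_def by (rule real_of_ereal_pos[OF dr_nonneg])
qed

lemma rstar_anti:
  assumes "decr_rearr f t \<noteq> \<infinity>" "decr_rearr f t' \<noteq> \<infinity>" "t' \<le> t"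
  shows "rstar f t \<le> rstar f t'"
proof -
  have "ereal (rstar f t) \<le> ereal (rstar f t')"
    using rstar_props(1)[OF assms(1)] rstar_props(1)[OF assms(2)] dr_antimono[OF assms(3)] by simp
  then show ?thesis by simp
qed

lemma diff_meas[measurable]: "diff_pow a f g \<in> borel_measurable lborel"
  unfolding diff_pow_def[abs_def] by measurable

lemma suff:
  fixes p q p0 q0 :: real and f g :: "real \<Rightarrow> real"
  assumes p0: "0 < p0" and q0: "0 < q0" and p: "0 < p" and q: "0 < q" and qq: "q \<ge> q0"
    and rr: "q / p \<le> q0 / p0"
    and fm: "f \<in> borel_measurable lebesgue" and gm: "g \<in> borel_measurable lebesgue"
    and ci: "cond_i f g"
    and ext: "ext_integral_nonneg (dpow_integrand (q0 / p0) (diff_pow q0 f g))"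
    and fin: "AE t in lborel. t > 0 \<longrightarrow> decr_rearr f t \<noteq> \<infinity> \<and> decr_rearr g t \<noteq> \<infinity>"
    and int: "set_integrable lborel {0<..} (\<lambda>t. diff_pow q f g t * t powr (q / p - 1))"
  shows "(LINT t:{0<..}|lborel. dpow_integrand (q / p) (diff_pow q f g) t) \<ge> 0"
proof -
  define r r0 where "r = q / p" and "r0 = q0 / p0"
  have r0pos: "r0 > 0" and rle: "r \<le> r0" using p0 q0 rr by (auto simp: r_def r0_def)
  obtain \<tau>0 where t0: "\<tau>0 > 0"
    and le: "\<And>\<tau>. 0 < \<tau> \<and> \<tau> < \<tau>0 \<Longrightarrow> dist_fun f \<tau> \<le> dist_fun g \<tau>"
    and ge: "\<And>\<tau>. \<tau> > \<tau>0 \<Longrightarrow> dist_fun f \<tau> \<ge> dist_fun g \<tau>"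
    using ci unfolding cond_i_def by blast
  define h where "h t = diff_pow q f g t * t powr (r - 1)" for t
  define u where "u = dpow_integrand r0 (diff_pow q0 f g)"
  define w where "w t = (rstar f t powr q0 - rstar g t powr q0) * t powr (r0 - 1)" for t
  have uw: "u t = r0 * w t" for t unfolding u_def w_def dpow_integrand_def diff_pow_def by simp
  have hx: "h t = (rstar f t powr q - rstar g t powr q) * t powr (r - 1)" for t
    unfolding h_def diff_pow_def by simp
  define Fin where "Fin t \<longleftrightarrow> decr_rearr f t \<noteq> \<infinity> \<and> decr_rearr g t \<noteq> \<infinity>" for t
  have fin': "AE t in lborel. t > 0 \<longrightarrow> Fin t" using fin unfolding Fin_def .
  have nnf: "rstar f t \<ge> 0" and nng: "rstar g t \<ge> 0" for t
    unfolding rstar_def by (auto intro: real_of_ereal_pos dr_nonneg)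
  have F1: "\<tau>0 \<le> rstar g t" if "Fin t" "rstar g t < rstar f t" for t
  proof (rule ccontr)
    assume a: "\<not> \<tau>0 \<le> rstar g t"
    have e: "ereal (rstar g t) = decr_rearr g t" using rstar_props(1)[of g t] that(1) Fin_def by auto
    have "decr_rearr g t < ereal \<tau>0" unfolding e[symmetric] using a by simp
    then have "decr_rearr f t \<le> decr_rearr g t" using P2[OF fm gm, of \<tau>0 t] le by blast
    then have "rstar f t \<le> rstar g t" using rstar_props(1)[of g t] rstar_props(1)[of f t] that(1) Fin_def
      by (metis ereal_less_eq(3))
    then show False using that(2) by simp
  qed
  have F2: "rstar g t \<le> \<tau>0" if "Fin t" "rstar f t < rstar g t" for t
  proof (rule ccontr)
    assume a: "\<not> rstar g t \<le> \<tau>0"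
    have e: "ereal (rstar g t) = decr_rearr g t" using rstar_props(1)[of g t] that(1) Fin_def by auto
    have "decr_rearr g t > ereal \<tau>0" unfolding e[symmetric] using a by simp
    then have "decr_rearr f t \<ge> decr_rearr g t" using P1[OF fm gm t0, of t] ge by blast
    then have "rstar f t \<ge> rstar g t" using rstar_props(1)[of g t] rstar_props(1)[of f t] that(1) Fin_def
      by (metis ereal_less_eq(3))
    then show False using that(2) by simp
  qed
  define P where "P = {t. 0 < t \<and> Fin t \<and> rstar g t < rstar f t}"
  define N where "N = {t. 0 < t \<and> Fin t \<and> rstar f t < rstar g t}"
  have PN: "t < t'" if "t \<in> P" "t' \<in> N" for t t'
  proof (rule ccontr)
    assume "\<not> t < t'"
    then have tt: "t' \<le> t" by simp
    have a: "rstar f t \<le> rstar f t'" "rstar g t \<le> rstar g t'"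
      using that tt by (auto simp: P_def N_def Fin_def intro: rstar_anti)
    have "\<tau>0 \<le> rstar g t" using F1 that by (auto simp: P_def)
    moreover have "rstar g t' \<le> \<tau>0" using F2 that by (auto simp: N_def)
    ultimately show False using a that by (auto simp: P_def N_def)
  qed
  have hm[measurable]: "h \<in> borel_measurable lborel" unfolding h_def[abs_def] r_def by measurable
  have um[measurable]: "u \<in> borel_measurable lborel"
    unfolding u_def dpow_integrand_def[abs_def] by measurable
  have key: "(\<integral>\<^sup>+ t. indicator {0<..} t * ennreal (- h t) \<partial>lborel)
      \<le> (\<integral>\<^sup>+ t. indicator {0<..} t * ennreal (h t) \<partial>lborel)"
  proof (cases "N = {}")
    case True
    have "AE t in lborel. indicator {0<..} t * ennreal (- h t) = 0"
      using fin'
    proof (rule AE_mp, intro AE_I2 impI)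
      fix t :: real assume "0 < t \<longrightarrow> Fin t"
      show "indicator {0<..} t * ennreal (- h t) = 0"
      proof (cases "t > 0")
        case True
        then have "\<not> rstar f t < rstar g t" using \<open>0 < t \<longrightarrow> Fin t\<close> \<open>N = {}\<close> by (auto simp: N_def)
        then have "rstar g t powr q \<le> rstar f t powr q" using q nng by (intro powr_mono2) auto
        then have "h t \<ge> 0" unfolding hx by simp
        then show ?thesis by (simp add: ennreal_neg)
      qed simp
    qed
    then have "(\<integral>\<^sup>+ t. indicator {0<..} t * ennreal (- h t) \<partial>lborel) = 0"
      by (simp add: nn_integral_0_iff_AE)
    then show ?thesis by simp
  next
    case Nne: False
    show ?thesis
    proof (cases "P = {}")
      case True
      have A1: "AE t in lborel. indicator {0<..} t * ennreal (u t) = 0"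
        using fin'
      proof (rule AE_mp, intro AE_I2 impI)
        fix t :: real assume "0 < t \<longrightarrow> Fin t"
        show "indicator {0<..} t * ennreal (u t) = 0"
        proof (cases "t > 0")
          case True
          then have "\<not> rstar g t < rstar f t" using \<open>0 < t \<longrightarrow> Fin t\<close> \<open>P = {}\<close> by (auto simp: P_def)
          then have "rstar f t powr q0 \<le> rstar g t powr q0" using q0 nnf by (intro powr_mono2) auto
          then have "u t \<le> 0" unfolding uw w_def using r0pos
            by (simp add: mult_nonneg_nonpos mult_nonpos_nonneg)
          then show ?thesis by (simp add: ennreal_neg)
        qed simp
      qed
      then have "(\<integral>\<^sup>+ t. indicator {0<..} t * ennreal (u t) \<partial>lborel) = 0"
        by (simp add: nn_integral_0_iff_AE)
      with ext have "(\<integral>\<^sup>+ t. indicator {0<..} t * ennreal (- u t) \<partial>lborel) = 0"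
        unfolding ext_integral_nonneg_def u_def r0_def by simp
      then have A2: "AE t in lborel. indicator {0<..} t * ennreal (- u t) = 0"
        by (simp add: nn_integral_0_iff_AE)
      have "AE t in lborel. indicator {0<..} t * ennreal (- h t) = 0"
        using fin' A2
      proof (eventually_elim)
        case (elim t)
        show ?case
        proof (cases "t > 0")
          case True
          then have Ft: "Fin t" using elim by simp
          have "\<not> rstar g t < rstar f t" using True Ft \<open>P = {}\<close> by (auto simp: P_def)
          moreover have "\<not> rstar f t < rstar g t"
          proof
            assume "rstar f t < rstar g t"
            then have "rstar f t powr q0 < rstar g t powr q0" using q0 nnf by (intro powr_less_mono2) auto
            then have "u t < 0" unfolding uw w_def using r0pos True
              by (simp add: mult_pos_neg mult_neg_pos)
            then show False using elim True by (simp add: ennreal_neg)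
          qed
          ultimately have "h t = 0" unfolding hx by simp
          then show ?thesis by simp
        qed simp
      qed
      then have "(\<integral>\<^sup>+ t. indicator {0<..} t * ennreal (- h t) \<partial>lborel) = 0"
        by (simp add: nn_integral_0_iff_AE)
      then show ?thesis by simp
    next
      case Pne: False
      obtain n where n: "n \<in> N" using Nne by auto
      obtain p1 where p1: "p1 \<in> P" using Pne by auto
      define ts where "ts = Sup P"
      have bdd: "bdd_above P" using PN n by (meson bdd_above.I less_imp_le)
      have tsP: "t \<le> ts" if "t \<in> P" for t using cSup_upper[OF that bdd] ts_def by simp
      have tsN: "ts \<le> t" if "t \<in> N" for t unfolding ts_def
        using Pne PN that by (intro cSup_least) (auto intro: less_imp_le)
      have tspos: "ts > 0" using tsP[OF p1] p1 by (auto simp: P_def)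
      define K where "K = (q/q0) * \<tau>0 powr (q - q0) * ts powr (r - r0)"
      have Kpos: "K > 0" unfolding K_def using q q0 t0 tspos by simp
      have pw: "h t \<ge> K * w t" if "t > 0" "Fin t" for t
      proof -
        consider "rstar g t < rstar f t" | "rstar f t < rstar g t" | "rstar f t = rstar g t" by linarith
        then show ?thesis
        proof cases
          case 1
          then have tP: "t \<in> P" using that by (auto simp: P_def)
          show ?thesis unfolding hx w_def K_def
            by (rule pw_P) (use 1 F1[OF that(2) 1] t0 qq q0 that tsP[OF tP] rle in auto)
        next
          case 2
          then have tN: "t \<in> N" using that by (auto simp: N_def)
          show ?thesis unfolding hx w_def K_def
            by (rule pw_N) (use 2 F2[OF that(2) 2] nnf t0 qq q0 tspos tsN[OF tN] rle in auto)
        qed (simp add: hx w_def)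
      qed
      define c where "c = K / r0"
      have cpos: "c > 0" using Kpos r0pos by (simp add: c_def)
      have Kc: "K * w t = c * u t" for t unfolding uw c_def using r0pos by simp
      have B1: "AE t in lborel. indicator {0<..} t * ennreal (- h t) \<le> ennreal c * (indicator {0<..} t * ennreal (- u t))"
        using fin'
      proof (eventually_elim)
        case (elim t)
        show ?case
        proof (cases "t > 0")
          case True
          then have "- h t \<le> c * (- u t)" using pw[OF True] elim Kc[of t] by simp
          then have "ennreal (- h t) \<le> ennreal (c * (- u t))" by (rule ennreal_leI)
          also have "\<dots> = ennreal c * ennreal (- u t)" using cpos by (intro ennreal_mult') simp
          finally show ?thesis using True by simp
        qed simp
      qed
      have B2: "AE t in lborel. ennreal c * (indicator {0<..} t * ennreal (u t)) \<le> indicator {0<..} t * ennreal (h t)"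
        using fin'
      proof (eventually_elim)
        case (elim t)
        show ?case
        proof (cases "t > 0")
          case True
          then have "c * u t \<le> h t" using pw[OF True] elim Kc[of t] by simp
          then have "ennreal (c * u t) \<le> ennreal (h t)" by (rule ennreal_leI)
          then show ?thesis using True cpos by (simp add: ennreal_mult')
        qed simp
      qed
      have "(\<integral>\<^sup>+ t. indicator {0<..} t * ennreal (- h t) \<partial>lborel)
          \<le> (\<integral>\<^sup>+ t. ennreal c * (indicator {0<..} t * ennreal (- u t)) \<partial>lborel)"
        by (rule nn_integral_mono_AE[OF B1])
      also have "\<dots> = ennreal c * (\<integral>\<^sup>+ t. indicator {0<..} t * ennreal (- u t) \<partial>lborel)"
        by (rule nn_integral_cmult) measurable
      also have "\<dots> \<le> ennreal c * (\<integral>\<^sup>+ t. indicator {0<..} t * ennreal (u t) \<partial>lborel)"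
        using ext unfolding ext_integral_nonneg_def u_def r0_def by (intro mult_left_mono) auto
      also have "\<dots> = (\<integral>\<^sup>+ t. ennreal c * (indicator {0<..} t * ennreal (u t)) \<partial>lborel)"
        by (rule nn_integral_cmult[symmetric]) measurable
      also have "\<dots> \<le> (\<integral>\<^sup>+ t. indicator {0<..} t * ennreal (h t) \<partial>lborel)"
        by (rule nn_integral_mono_AE[OF B2])
      finally show ?thesis .
    qed
  qed
  have int': "set_integrable lborel {0<..} h" using int unfolding h_def r_def .
  have "(LINT t:{0<..}|lborel. h t) \<ge> 0" by (rule lint_nonneg[OF int' key])
  moreover have "(LINT t:{0<..}|lborel. dpow_integrand (q / p) (diff_pow q f g) t) = r * (LINT t:{0<..}|lborel. h t)"
  proof -
    have "(\<lambda>t. dpow_integrand (q / p) (diff_pow q f g) t) = (\<lambda>t. r * h t)"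
      unfolding dpow_integrand_def h_def r_def by (auto simp: mult.assoc)
    then show ?thesis by simp
  qed
  moreover have "r \<ge> 0" using p q by (simp add: r_def)
  ultimately show ?thesis by simp
qed



definition stepf :: "real \<Rightarrow> real \<Rightarrow> real \<Rightarrow> real \<Rightarrow> real \<Rightarrow> real" where
  "stepf c1 c2 x1 x2 x = (if 0 < x \<and> x < x1 then c1 else if x1 \<le> x \<and> x < x2 then c2 else 0)"

lemma emeasure_leb_Ioo: "0 \<le> a \<Longrightarrow> emeasure lebesgue {0<..<a} = ennreal a"
  by (simp add: emeasure_completion)

lemma stepf_meas: "stepf c1 c2 x1 x2 \<in> borel_measurable lebesgue"
proof -
  have "stepf c1 c2 x1 x2 \<in> borel_measurable lborel"
    unfolding stepf_def[abs_def] by measurable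
  then show ?thesis by (rule measurable_completion)
qed

lemma stepf_dist:
  assumes "0 < c2" "c2 \<le> c1" "0 < x1" "x1 \<le> x2" "0 \<le> \<tau>"
  shows "dist_fun (stepf c1 c2 x1 x2) \<tau> = (if \<tau> < c2 then ennreal x2 else if \<tau> < c1 then ennreal x1 else 0)"
proof -
  have "{x \<in> {0<..}. \<bar>stepf c1 c2 x1 x2 x\<bar> > \<tau>} =
     (if \<tau> < c2 then {0<..<x2} else if \<tau> < c1 then {0<..<x1} else {})"
    using assms by (auto simp: stepf_def split: if_splits)
  then show ?thesis unfolding dist_fun_def using assms by (simp add: emeasure_leb_Ioo)
qed

lemma Inf_pos_ereal: "Inf {ereal \<tau> | \<tau>. \<tau> > 0 \<and> P \<tau>} = 0" if "\<And>\<tau>. \<tau> > 0 \<Longrightarrow> P \<tau>"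
proof (rule antisym)
  show "0 \<le> Inf {ereal \<tau> | \<tau>. \<tau> > 0 \<and> P \<tau>}" by (rule Inf_greatest) auto
  show "Inf {ereal \<tau> | \<tau>. \<tau> > 0 \<and> P \<tau>} \<le> 0"
  proof (rule dense_ge)
    fix w :: ereal assume "0 < w"
    show "Inf {ereal \<tau> | \<tau>. \<tau> > 0 \<and> P \<tau>} \<le> w"
    proof (cases w)
      case (real r)
      then have "r > 0" using \<open>0 < w\<close> by simp
      then show ?thesis using real that by (intro Inf_lower) auto
    qed (use \<open>0 < w\<close> in auto)
  qed
qed

lemma Inf_ge_ereal: "Inf {ereal \<tau> | \<tau>. \<tau> > 0 \<and> P \<tau>} = ereal c"
  if "c > 0" "\<And>\<tau>. \<tau> > 0 \<Longrightarrow> P \<tau> \<longleftrightarrow> c \<le> \<tau>"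
proof (rule antisym)
  show "Inf {ereal \<tau> | \<tau>. \<tau> > 0 \<and> P \<tau>} \<le> ereal c" using that by (intro Inf_lower) auto
  show "ereal c \<le> Inf {ereal \<tau> | \<tau>. \<tau> > 0 \<and> P \<tau>}" using that by (intro Inf_greatest) auto
qed

lemma stepf_dr:
  assumes "0 < c2" "c2 \<le> c1" "0 < x1" "x1 \<le> x2" "0 < t"
  shows "decr_rearr (stepf c1 c2 x1 x2) t = ereal (if t < x1 then c1 else if t < x2 then c2 else 0)"
proof -
  have D: "\<And>\<tau>. \<tau> > 0 \<Longrightarrow> dist_fun (stepf c1 c2 x1 x2) \<tau> = (if \<tau> < c2 then ennreal x2 else if \<tau> < c1 then ennreal x1 else 0)"
    using stepf_dist assms by simp
  consider "t < x1" | "x1 \<le> t" "t < x2" | "x2 \<le> t" by linarith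
  then show ?thesis
  proof cases
    case 1
    have "decr_rearr (stepf c1 c2 x1 x2) t = ereal c1" unfolding decr_rearr_def
      by (rule Inf_ge_ereal) (use assms 1 D in \<open>auto simp: ennreal_le_iff2 not_less\<close>)
    then show ?thesis using 1 by simp
  next
    case 2
    have "decr_rearr (stepf c1 c2 x1 x2) t = ereal c2" unfolding decr_rearr_def
      by (rule Inf_ge_ereal) (use assms 2 D in \<open>auto simp: not_less\<close>)
    then show ?thesis using 2 assms by simp
  next
    case 3
    have "decr_rearr (stepf c1 c2 x1 x2) t = 0" unfolding decr_rearr_def
      by (rule Inf_pos_ereal) (use assms 3 D in \<open>auto\<close>)
    then show ?thesis using 3 assms by (simp add: zero_ereal_def)
  qed
qed

lemma stepf_rstar:
  assumes "0 < c2" "c2 \<le> c1" "0 < x1" "x1 \<le> x2" "0 < t"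
  shows "rstar (stepf c1 c2 x1 x2) t = (if t < x1 then c1 else if t < x2 then c2 else 0)"
  unfolding rstar_def stepf_dr[OF assms] by simp

lemma stepf_fin:
  assumes "0 < c2" "c2 \<le> c1" "0 < x1" "x1 \<le> x2" "0 < t"
  shows "decr_rearr (stepf c1 c2 x1 x2) t \<noteq> \<infinity>"
  unfolding stepf_dr[OF assms] by simp



definition Bf :: "real \<Rightarrow> real \<Rightarrow> real \<Rightarrow> real" where
  "Bf e y t = indicator {0<..<y} t * t powr (e - 1)"

lemma Bf_meas[measurable]: "Bf e y \<in> borel_measurable borel"
  unfolding Bf_def[abs_def] by measurable

lemma Bf_has_integral:
  assumes "e > 0" "y \<ge> 0"
  shows "(Bf e y has_integral (y powr e / e)) UNIV"
proof -
  have "((\<lambda>x. x powr (e - 1)) has_integral (y powr (e - 1 + 1) / (e - 1 + 1))) {0..y}"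
    using assms by (intro has_integral_powr_from_0) auto
  then have "((\<lambda>x. x powr (e - 1)) has_integral (y powr e / e)) {0..y}" by simp
  then have "((\<lambda>x. x powr (e - 1)) has_integral (y powr e / e)) (box 0 y)"
    unfolding has_integral_open_interval cbox_interval .
  then have "((\<lambda>x. if x \<in> {0<..<y} then x powr (e - 1) else 0) has_integral (y powr e / e)) UNIV"
    unfolding has_integral_restrict_UNIV box_real .
  moreover have "(\<lambda>x. if x \<in> {0<..<y} then x powr (e - 1) else 0) = Bf e y"
    by (auto simp: Bf_def fun_eq_iff)
  ultimately show ?thesis by simp
qed

lemma Bf_int:
  assumes "e > 0" "y \<ge> 0"
  shows "integrable lborel (Bf e y)" "integral\<^sup>L lborel (Bf e y) = y powr e / e"
proof -
  have nn: "\<And>x. 0 \<le> Bf e y x" by (simp add: Bf_def)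
  have "integral\<^sup>N lborel (Bf e y) = ennreal (y powr e / e)"
    by (rule nn_integral_has_integral_lborel[OF Bf_meas nn Bf_has_integral[OF assms]])
  then show I: "integrable lborel (Bf e y)"
    by (intro integrableI_nonneg) (auto simp: nn)
  show "integral\<^sup>L lborel (Bf e y) = y powr e / e"
    using has_integral_integral_lborel[OF I] Bf_has_integral[OF assms] by (rule has_integral_unique)
qed



lemma combo:
  fixes k :: "real \<Rightarrow> real"
  assumes E: "E > 0" and y: "y1 \<ge> 0" "y2 \<ge> 0" "y3 \<ge> 0"
    and eq: "\<And>t. indicator {0<..} t * k t = c1 * Bf E y1 t + c2 * Bf E y2 t + c3 * Bf E y3 t"
  shows "set_integrable lborel {0<..} k"
    "(LINT t:{0<..}|lborel. k t) = c1 * (y1 powr E / E) + c2 * (y2 powr E / E) + c3 * (y3 powr E / E)"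
proof -
  have fe: "(\<lambda>t. indicator {0<..} t *\<^sub>R k t) = (\<lambda>t. c1 * Bf E y1 t + c2 * Bf E y2 t + c3 * Bf E y3 t)"
    using eq by (auto simp: fun_eq_iff)
  note I1 = Bf_int[OF E y(1)] and I2 = Bf_int[OF E y(2)] and I3 = Bf_int[OF E y(3)]
  have int: "integrable lborel (\<lambda>t. c1 * Bf E y1 t + c2 * Bf E y2 t + c3 * Bf E y3 t)"
    using I1(1) I2(1) I3(1) by simp
  then show "set_integrable lborel {0<..} k" unfolding set_integrable_def fe .
  have "(LINT t:{0<..}|lborel. k t) = integral\<^sup>L lborel (\<lambda>t. c1 * Bf E y1 t + c2 * Bf E y2 t + c3 * Bf E y3 t)"
    unfolding set_lebesgue_integral_def fe ..
  also have "\<dots> = c1 * integral\<^sup>L lborel (Bf E y1) + c2 * integral\<^sup>L lborel (Bf E y2) + c3 * integral\<^sup>L lborel (Bf E y3)"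
    using I1(1) I2(1) I3(1) by simp
  finally show "(LINT t:{0<..}|lborel. k t) = c1 * (y1 powr E / E) + c2 * (y2 powr E / E) + c3 * (y3 powr E / E)"
    using I1(2) I2(2) I3(2) by simp
qed

lemma fam1_pw:
  assumes a: "a \<ge> 1" and S: "0 < S" "S < 1" and T: "1 < T" and e: "e > 0"
  shows "indicator {0<..} t * (m * diff_pow e (stepf a a 1 1) (stepf a 1 S T) t * t powr (E - 1))
     = (m * a powr e) * Bf E 1 t + (- m * (a powr e - 1)) * Bf E S t + (- m) * Bf E T t"
proof (cases "t > 0")
  case True
  have rf: "rstar (stepf a a 1 1) t = (if t < 1 then a else if t < 1 then a else 0)"
    using a True by (intro stepf_rstar) auto
  have rg: "rstar (stepf a 1 S T) t = (if t < S then a else if t < T then 1 else 0)"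
    using a S T True by (intro stepf_rstar) auto
  consider "t < S" | "S \<le> t" "t < 1" | "1 \<le> t" "t < T" | "T \<le> t" by linarith
  then show ?thesis
    using True S T e by cases (auto simp: diff_pow_def rf rg Bf_def algebra_simps)
qed (simp add: Bf_def)

lemma fam2_pw:
  assumes b: "0 < b" "b \<le> a" and e: "e > 0"
  shows "indicator {0<..} t * (m * diff_pow e (stepf a b 1 2) (stepf 1 1 2 2) t * t powr (E - 1))
     = (m * (a powr e - b powr e)) * Bf E 1 t + (m * (b powr e - 1)) * Bf E 2 t + 0 * Bf E 2 t"
proof (cases "t > 0")
  case True
  have rf: "rstar (stepf a b 1 2) t = (if t < 1 then a else if t < 2 then b else 0)"
    using b True by (intro stepf_rstar) auto
  have rg: "rstar (stepf 1 1 2 2) t = (if t < 2 then 1 else if t < 2 then 1 else 0)"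
    using True by (intro stepf_rstar) auto
  consider "t < 1" | "1 \<le> t" "t < 2" | "2 \<le> t" by linarith
  then show ?thesis
    using True e by cases (auto simp: diff_pow_def rf rg Bf_def algebra_simps)
qed (simp add: Bf_def)

lemma ex_u:
  fixes s \<alpha> :: real
  assumes s: "0 < s" "s < 1" and al: "\<alpha> > 0"
  shows "\<exists>u. 0 < u \<and> u < 1 \<and> (2 - u) powr \<alpha> - 1 - (2 powr s - 1) * (1 - u powr \<alpha>) > 0"
proof -
  define \<phi> where "\<phi> u = (2 - u) powr \<alpha> - 1 - (2 powr s - 1) * (1 - u powr \<alpha>)" for u :: real
  have D: "(\<phi> has_real_derivative (\<alpha> * (2 powr s - 2))) (at 1)"
  proof -
    have "(\<phi> has_real_derivative
        (\<alpha> * (2 - 1) powr (\<alpha> - 1) * (0 - 1) - (2 powr s - 1) * (0 - \<alpha> * 1 powr (\<alpha> - 1)))) (at 1)"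
      unfolding \<phi>_def[abs_def] by (auto intro!: derivative_eq_intros)
    then show ?thesis by (simp add: algebra_simps)
  qed
  have "2 powr s < 2 powr 1" using s by (intro powr_less_mono) auto
  then have neg: "\<alpha> * (2 powr s - 2) < 0" using al by (simp add: mult_pos_neg)
  obtain d where d: "d > 0" "\<And>h. h > 0 \<Longrightarrow> h < d \<Longrightarrow> \<phi> 1 < \<phi> (1 - h)"
    using DERIV_neg_dec_left[OF D neg] by blast
  define h where "h = min (d/2) (1/2)"
  have h: "h > 0" "h < d" "h < 1" using d by (auto simp: h_def)
  have "\<phi> 1 = 0" by (simp add: \<phi>_def)
  then have "\<phi> (1 - h) > 0" using d(2)[OF h(1,2)] by simp
  then show ?thesis using h by (intro exI[of _ "1 - h"]) (auto simp: \<phi>_def)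
qed

lemma ex_k:
  fixes s w w0 :: real
  assumes s: "0 < s" and w: "w > w0" "w0 > 0"
  shows "\<exists>k. 0 < k \<and> k < w0 \<and> w * (1 - (1 - k / w0) powr s) - ((1 + k) powr s - 1) > 0"
proof -
  define \<psi> where "\<psi> k = w * (1 - (1 - k / w0) powr s) - ((1 + k) powr s - 1)" for k :: real
  have D: "(\<psi> has_real_derivative (s * (w / w0 - 1))) (at 0)"
  proof -
    have "(\<psi> has_real_derivative
        (w * (0 - s * (1 - 0 / w0) powr (s - 1) * (0 - 1 / w0)) - (s * (1 + 0) powr (s - 1) * (0 + 1) - 0))) (at 0)"
      unfolding \<psi>_def[abs_def] using w by (auto intro!: derivative_eq_intros)
    then show ?thesis by (simp add: algebra_simps)
  qed
  have "w / w0 > 1" using w by simp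
  then have pos: "s * (w / w0 - 1) > 0" using s by simp
  obtain d where d: "d > 0" "\<And>h. h > 0 \<Longrightarrow> h < d \<Longrightarrow> \<psi> 0 < \<psi> (0 + h)"
    using DERIV_pos_inc_right[OF D pos] by blast
  define h where "h = min (d/2) (w0/2)"
  have h: "h > 0" "h < d" "h < w0" using d w by (auto simp: h_def)
  have "\<psi> 0 = 0" by (simp add: \<psi>_def)
  then have "\<psi> h > 0" using d(2)[OF h(1,2)] by simp
  then show ?thesis using h by (intro exI[of _ h]) (auto simp: \<psi>_def)
qed



lemma mem_classA_D:
  assumes "(p, q) \<in> classA p0 q0" "f \<in> borel_measurable lebesgue" "g \<in> borel_measurable lebesgue"
    "cond_i f g" "ext_integral_nonneg (dpow_integrand (q0 / p0) (diff_pow q0 f g))"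
    "AE t in lborel. t > 0 \<longrightarrow> decr_rearr f t \<noteq> \<infinity> \<and> decr_rearr g t \<noteq> \<infinity>"
    "set_integrable lborel {0<..} (\<lambda>t. diff_pow q f g t * t powr (q / p - 1))"
  shows "(LINT t:{0<..}|lborel. dpow_integrand (q / p) (diff_pow q f g) t) \<ge> 0"
  using assms unfolding classA_def by blast

lemma nec1:
  fixes p q p0 q0 :: real
  assumes p0: "0 < p0" and q0: "0 < q0" and p: "0 < p" and q: "0 < q" and qq: "q < q0"
  shows "(p, q) \<notin> classA p0 q0"
proof
  assume mem: "(p, q) \<in> classA p0 q0"
  define r r0 s \<alpha> where "r = q / p" and "r0 = q0 / p0" and "s = q / q0" and "\<alpha> = r / r0"
  have rpos: "r > 0" and r0pos: "r0 > 0" and spos: "0 < s" "s < 1" and apos: "\<alpha> > 0"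
    using p0 q0 p q qq by (auto simp: r_def r0_def s_def \<alpha>_def)
  obtain u where u: "0 < u" "u < 1" "(2 - u) powr \<alpha> - 1 - (2 powr s - 1) * (1 - u powr \<alpha>) > 0"
    using ex_u[OF spos apos] by blast
  define a S T where "a = (2::real) powr (1 / q0)" and "S = u powr (1 / r0)" and "T = (2 - u) powr (1 / r0)"
  have a1: "a \<ge> 1" unfolding a_def using q0 by (intro ge_one_powr_ge_zero) auto
  have S: "0 < S" "S < 1" unfolding S_def using u r0pos powr_less_mono2[of "1/r0" u 1]
    by auto
  have T: "1 < T" unfolding T_def using u r0pos by (auto intro: gr_one_powr)
  have aq0: "a powr q0 = 2" unfolding a_def using q0 by (simp add: powr_powr)
  have aq: "a powr q = 2 powr s" unfolding a_def s_def using q0 by (simp add: powr_powr)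
  have Sr0: "S powr r0 = u" unfolding S_def using r0pos u by (simp add: powr_powr)
  have Tr0: "T powr r0 = 2 - u" unfolding T_def using r0pos u by (simp add: powr_powr)
  have Sr: "S powr r = u powr \<alpha>" unfolding S_def \<alpha>_def using r0pos u by (simp add: powr_powr)
  have Tr: "T powr r = (2 - u) powr \<alpha>" unfolding T_def \<alpha>_def using r0pos u by (simp add: powr_powr)
  define f g where "f = stepf a a 1 1" and "g = stepf a 1 S T"
  have fm: "f \<in> borel_measurable lebesgue" and gm: "g \<in> borel_measurable lebesgue"
    unfolding f_def g_def by (rule stepf_meas)+
  have df: "dist_fun f \<tau> = (if \<tau> < a then ennreal 1 else if \<tau> < a then ennreal 1 else 0)" if "\<tau> > 0" for \<tau>
    unfolding f_def using a1 that by (intro stepf_dist) auto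
  have dg: "dist_fun g \<tau> = (if \<tau> < 1 then ennreal T else if \<tau> < a then ennreal S else 0)" if "\<tau> > 0" for \<tau>
    unfolding g_def using a1 that S T by (intro stepf_dist) auto
  have ci: "cond_i f g" unfolding cond_i_def
  proof (intro exI[of _ 1] conjI allI impI)
    fix \<tau> :: real assume "0 < \<tau> \<and> \<tau> < 1"
    then show "dist_fun f \<tau> \<le> dist_fun g \<tau>" using df dg T a1 by (auto intro: ennreal_leI)
  next
    fix \<tau> :: real assume "1 < \<tau>"
    then show "dist_fun g \<tau> \<le> dist_fun f \<tau>" using df dg S by (auto intro: ennreal_leI)
  qed simp
  have fin: "AE t in lborel. t > 0 \<longrightarrow> decr_rearr f t \<noteq> \<infinity> \<and> decr_rearr g t \<noteq> \<infinity>"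
    unfolding f_def g_def using a1 S T by (intro AE_I2 impI conjI stepf_fin) auto
  have eq0: "indicator {0<..} t * dpow_integrand r0 (diff_pow q0 f g) t =
      (r0 * a powr q0) * Bf r0 1 t + (- r0 * (a powr q0 - 1)) * Bf r0 S t + (- r0) * Bf r0 T t" for t
    using fam1_pw[OF a1 S T q0, of t r0 r0] unfolding dpow_integrand_def f_def g_def .
  note C0 = combo[OF r0pos _ _ _ eq0]
  have v0: "(LINT t:{0<..}|lborel. dpow_integrand r0 (diff_pow q0 f g) t) = 0"
    using C0(2) S T r0pos by (simp add: aq0 Sr0 Tr0)
  have ext: "ext_integral_nonneg (dpow_integrand (q0 / p0) (diff_pow q0 f g))"
    using lint_nonneg_conv[OF C0(1)] v0 S T unfolding ext_integral_nonneg_def r0_def by simp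
  have eq1: "indicator {0<..} t * (diff_pow q f g t * t powr (q / p - 1)) =
      (1 * a powr q) * Bf r 1 t + (- 1 * (a powr q - 1)) * Bf r S t + (- 1) * Bf r T t" for t
    using fam1_pw[OF a1 S T q, of t 1 r] unfolding f_def g_def r_def by simp
  note C1 = combo[OF rpos _ _ _ eq1]
  have eq2: "indicator {0<..} t * dpow_integrand (q / p) (diff_pow q f g) t =
      (r * a powr q) * Bf r 1 t + (- r * (a powr q - 1)) * Bf r S t + (- r) * Bf r T t" for t
    using fam1_pw[OF a1 S T q, of t r r] unfolding dpow_integrand_def f_def g_def r_def .
  note C2 = combo[OF rpos _ _ _ eq2]
  have "(LINT t:{0<..}|lborel. dpow_integrand (q / p) (diff_pow q f g) t) \<ge> 0"
    by (rule mem_classA_D[OF mem fm gm ci ext fin C1(1)]) (use S T in auto)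
  moreover have "(LINT t:{0<..}|lborel. dpow_integrand (q / p) (diff_pow q f g) t)
      = 2 powr s - (2 powr s - 1) * u powr \<alpha> - (2 - u) powr \<alpha>"
    using C2(2) S T rpos by (simp add: aq Sr Tr algebra_simps)
  ultimately show False using u(3) by (simp add: algebra_simps)
qed

lemma nec2:
  fixes p q p0 q0 :: real
  assumes p0: "0 < p0" and q0: "0 < q0" and p: "0 < p" and q: "0 < q" and rr: "q / p > q0 / p0"
  shows "(p, q) \<notin> classA p0 q0"
proof
  assume mem: "(p, q) \<in> classA p0 q0"
  define r r0 s where "r = q / p" and "r0 = q0 / p0" and "s = q / q0"
  have rpos: "r > 0" and r0pos: "r0 > 0" and spos: "0 < s" and rgt: "r > r0"
    using p0 q0 p q rr by (auto simp: r_def r0_def s_def)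
  define w w0 where "w = 2 powr r - 1" and "w0 = 2 powr r0 - 1"
  have w0pos: "w0 > 0" unfolding w0_def using r0pos by simp
  have wgt: "w > w0" unfolding w_def w0_def using rgt by simp
  obtain k where k: "0 < k" "k < w0" "w * (1 - (1 - k / w0) powr s) - ((1 + k) powr s - 1) > 0"
    using ex_k[OF spos wgt w0pos] by blast
  have kw: "0 < 1 - k / w0" using k w0pos by simp
  define a b where "a = (1 + k) powr (1 / q0)" and "b = (1 - k / w0) powr (1 / q0)"
  have bpos: "0 < b" unfolding b_def using kw powr_gt_zero[of "1 - k / w0" "1 / q0"] by linarith
  have ba: "b \<le> a" unfolding a_def b_def using k w0pos q0 kw
    by (intro powr_mono2) (auto simp: field_simps)
  have aq0: "a powr q0 = 1 + k" unfolding a_def using q0 k by (simp add: powr_powr)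
  have bq0: "b powr q0 = 1 - k / w0" unfolding b_def using q0 kw by (simp add: powr_powr)
  have aq: "a powr q = (1 + k) powr s" unfolding a_def s_def using q0 k by (simp add: powr_powr)
  have bq: "b powr q = (1 - k / w0) powr s" unfolding b_def s_def using q0 kw by (simp add: powr_powr)
  define f g where "f = stepf a b 1 2" and "g = stepf 1 1 2 2"
  have fm: "f \<in> borel_measurable lebesgue" and gm: "g \<in> borel_measurable lebesgue"
    unfolding f_def g_def by (rule stepf_meas)+
  have df: "dist_fun f \<tau> = (if \<tau> < b then ennreal 2 else if \<tau> < a then ennreal 1 else 0)" if "\<tau> > 0" for \<tau>
    unfolding f_def using bpos ba that by (intro stepf_dist) auto
  have dg: "dist_fun g \<tau> = (if \<tau> < 1 then ennreal 2 else if \<tau> < 1 then ennreal 2 else 0)" if "\<tau> > 0" for \<tau>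
    unfolding g_def using that by (intro stepf_dist) auto
  have ci: "cond_i f g" unfolding cond_i_def
  proof (intro exI[of _ 1] conjI allI impI)
    fix \<tau> :: real assume "0 < \<tau> \<and> \<tau> < 1"
    then show "dist_fun f \<tau> \<le> dist_fun g \<tau>" using df dg by (auto intro: ennreal_leI)
  next
    fix \<tau> :: real assume "1 < \<tau>"
    then show "dist_fun g \<tau> \<le> dist_fun f \<tau>" using df dg by auto
  qed simp
  have fin: "AE t in lborel. t > 0 \<longrightarrow> decr_rearr f t \<noteq> \<infinity> \<and> decr_rearr g t \<noteq> \<infinity>"
    unfolding f_def g_def using bpos ba by (intro AE_I2 impI conjI stepf_fin) auto
  have eq0: "indicator {0<..} t * dpow_integrand r0 (diff_pow q0 f g) t =
      (r0 * (a powr q0 - b powr q0)) * Bf r0 1 t + (r0 * (b powr q0 - 1)) * Bf r0 2 t + 0 * Bf r0 2 t" for t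
    using fam2_pw[OF bpos ba q0, of t r0 r0] unfolding dpow_integrand_def f_def g_def .
  note C0 = combo[OF r0pos _ _ _ eq0]
  have v0: "(LINT t:{0<..}|lborel. dpow_integrand r0 (diff_pow q0 f g) t) = 0"
  proof -
    have "(LINT t:{0<..}|lborel. dpow_integrand r0 (diff_pow q0 f g) t)
        = (a powr q0 - b powr q0) + (b powr q0 - 1) * 2 powr r0"
      using C0(2) r0pos by simp
    also have "\<dots> = k + k / w0 - k / w0 * (w0 + 1)" unfolding aq0 bq0 w0_def by (simp add: algebra_simps)
    also have "\<dots> = 0" using w0pos by (simp add: field_simps)
    finally show ?thesis .
  qed
  have ext: "ext_integral_nonneg (dpow_integrand (q0 / p0) (diff_pow q0 f g))"
    using lint_nonneg_conv[OF C0(1)] v0 unfolding ext_integral_nonneg_def r0_def by simp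
  have eq1: "indicator {0<..} t * (diff_pow q f g t * t powr (q / p - 1)) =
      (1 * (a powr q - b powr q)) * Bf r 1 t + (1 * (b powr q - 1)) * Bf r 2 t + 0 * Bf r 2 t" for t
    using fam2_pw[OF bpos ba q, of t 1 r] unfolding f_def g_def r_def by simp
  note C1 = combo[OF rpos _ _ _ eq1]
  have eq2: "indicator {0<..} t * dpow_integrand (q / p) (diff_pow q f g) t =
      (r * (a powr q - b powr q)) * Bf r 1 t + (r * (b powr q - 1)) * Bf r 2 t + 0 * Bf r 2 t" for t
    using fam2_pw[OF bpos ba q, of t r r] unfolding dpow_integrand_def f_def g_def r_def .
  note C2 = combo[OF rpos _ _ _ eq2]
  have "(LINT t:{0<..}|lborel. dpow_integrand (q / p) (diff_pow q f g) t) \<ge> 0"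
    by (rule mem_classA_D[OF mem fm gm ci ext fin C1(1)]) auto
  moreover have "(LINT t:{0<..}|lborel. dpow_integrand (q / p) (diff_pow q f g) t)
      = ((1 + k) powr s - 1) - w * (1 - (1 - k / w0) powr s)"
  proof -
    have "(LINT t:{0<..}|lborel. dpow_integrand (q / p) (diff_pow q f g) t)
        = (a powr q - b powr q) + (b powr q - 1) * 2 powr r"
      using C2(2) rpos by simp
    also have "\<dots> = ((1 + k) powr s - 1) - w * (1 - (1 - k / w0) powr s)"
      unfolding aq bq w_def by (simp add: algebra_simps)
    finally show ?thesis .
  qed
  ultimately show False using k(3) by simp
qed

theorem mainTheorem8:
  fixes p0 q0 :: real
  assumes "0 < p0" and "0 < q0"
  shows "classA p0 q0 = {(p, q). 0 < p \<and> 0 < q \<and> p \<ge> p0 \<and> q \<ge> q0 \<and> q / p \<le> q0 / p0}"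
proof (intro set_eqI iffI)
  fix pq assume mem: "pq \<in> classA p0 q0"
  obtain p q where pq: "pq = (p, q)" by (cases pq)
  have p: "0 < p" and q: "0 < q" using mem unfolding pq classA_def by auto
  have qq: "q \<ge> q0" using nec1[OF assms p q] mem pq by (meson not_le)
  have rr: "q / p \<le> q0 / p0" using nec2[OF assms p q] mem pq by (meson not_le)
  have "q * p0 \<le> q0 * p" using rr p assms by (simp add: field_simps)
  moreover have "q0 * p0 \<le> q * p0" using qq assms by simp
  ultimately have "q0 * p0 \<le> q0 * p" by linarith
  then have "p0 \<le> p" using assms by simp
  then show "pq \<in> {(p, q). 0 < p \<and> 0 < q \<and> p \<ge> p0 \<and> q \<ge> q0 \<and> q / p \<le> q0 / p0}"
    using pq p q qq rr by simp
next
  fix pq assume "pq \<in> {(p, q). 0 < p \<and> 0 < q \<and> p \<ge> p0 \<and> q \<ge> q0 \<and> q / p \<le> q0 / p0}"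
  then obtain p q where pq: "pq = (p, q)" and p: "0 < p" and q: "0 < q" and qq: "q \<ge> q0"
    and rr: "q / p \<le> q0 / p0" by auto
  show "pq \<in> classA p0 q0" unfolding pq classA_def
    using suff[OF assms p q qq rr] p q by auto
qed

end
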